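(* Let $\beta_\bullet\in\{\beta,\beta_v\}$, let $\to_{\beta_\bullet}$ be the contextual closure of the rule $\beta_\bullet$ on $\Lambda_{\mathcal O}$, and let $\rightsquigarrow_U$ be the unbiased iteration of an associated surface reduction (as defined in the context). Then $\rightsquigarrow_U$ is a normalizing strategy for $\to_{\beta_\bullet}$.
   Context: Terms: $M::=x\mid\lambda x.M\mid MM\mid \mathsf{op}(M,\dots,M)$, $\mathsf{op}$ ranging over a (possibly empty) set $\mathcal O$ of operator symbols with fixed arities, up to renaming of bound variables; this set is $\Lambda_{\mathcal O}$. Values $V::=x\mid\lambda x.M$. Contexts $C::=[\,]\mid MC\mid CM\mid\lambda x.C\mid\mathsf{op}(M,\dots,C,\dots,M)$. Rules $(\lambda x.M)N\mapsto_\beta M\{N/x\}$; $(\lambda x.M)V\mapsto_{\beta_v}M\{V/x\}$ ($V$ a value); $\to_{\beta_\bullet}$ is the closure under all contexts. Head contexts $H::=[\,]\mid\lambda x.H\mid HM$; weak $W::=[\,]\mid WM\mid MW$; left $L::=[\,]\mid LM\mid VL$; right $R::=[\,]\mid MR\mid RV$. Surface reduction $\to_s$: for $\beta$, closure of $\beta$ under head contexts; for $\beta_v$, closure of $\beta_v$ under weak, or left, or right contexts (any one choice). $\rightsquigarrow_U$ is defined inductively: if $M\to_sM'$ then $M\rightsquigarrow_UM'$; if $M$ is $\to_s$-normal: $\lambda x.P\rightsquigarrow_U\lambda x.P'$ if $P\rightsquigarrow_UP'$; $PQ\rightsquigarrow_UP'Q$ if $P\rightsquigarrow_UP'$; $PQ\rightsquigarrow_UPQ'$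 if $Q\rightsquigarrow_UQ'$; $\mathsf{op}(\dots,P_i,\dots)\rightsquigarrow_U\mathsf{op}(\dots,P_i',\dots)$ if $P_i\rightsquigarrow_UP_i'$. A relation $\rightsquigarrow\subseteq\to$ is a normalizing strategy for $\to$ if it has the same normal forms as $\to$ and, whenever $t$ has a $\to$-normal form (i.e. $t\to^*u$ with $u$ $\to$-normal), every maximal $\rightsquigarrow$-sequence from $t$ (infinite, or finite ending in a $\rightsquigarrow$-normal form) ends in a $\to$-normal form. *)

theory Defs
  imports Main
begin

datatype 'o tm = Var nat | Lam "'o tm" | App "'o tm" "'o tm" | Op 'o "'o tm list"

primrec wf :: "'o set \<Rightarrow> ('o \<Rightarrow> nat) \<Rightarrow> 'o tm \<Rightarrow> bool" where
  "wf Ops ar (Var i) = True"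
| "wf Ops ar (Lam t) = wf Ops ar t"
| "wf Ops ar (App s t) = (wf Ops ar s \<and> wf Ops ar t)"
| "wf Ops ar (Op g ts) = (g \<in> Ops \<and> length ts = ar g \<and> list_all (wf Ops ar) ts)"

primrec lift :: "nat \<Rightarrow> 'o tm \<Rightarrow> 'o tm" where
  "lift k (Var i) = (if i < k then Var i else Var (Suc i))"
| "lift k (Lam t) = Lam (lift (Suc k) t)"
| "lift k (App s t) = App (lift k s) (lift k t)"
| "lift k (Op g ts) = Op g (map (lift k) ts)"

text \<open>subst t k u = t{u/k}, removing the bound index k.\<close>
primrec subst :: "'o tm \<Rightarrow> nat \<Rightarrow> 'o tm \<Rightarrow> 'o tm" where
  "subst (Var i) k u = (if i < k then Var i else if i = k then u else Var (i - 1))"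
| "subst (Lam t) k u = Lam (subst t (Suc k) (lift 0 u))"
| "subst (App s t) k u = App (subst s k u) (subst t k u)"
| "subst (Op g ts) k u = Op g (map (\<lambda>t. subst t k u) ts)"

fun is_val :: "'o tm \<Rightarrow> bool" where
  "is_val (Var _) = True"
| "is_val (Lam _) = True"
| "is_val _ = False"

datatype calculus = Beta | BetaV

fun root :: "calculus \<Rightarrow> 'o tm \<Rightarrow> 'o tm \<Rightarrow> bool" where
  "root Beta (App (Lam M) N) P = (P = subst M 0 N)"
| "root BetaV (App (Lam M) N) P = (is_val N \<and> P = subst M 0 N)"
| "root _ _ _ = False"

inductive red :: "calculus \<Rightarrow> 'o tm \<Rightarrow> 'o tm \<Rightarrow> bool" for c where
  red_root: "root c M M' \<Longrightarrow> red c M M'"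
| red_lam: "red c M M' \<Longrightarrow> red c (Lam M) (Lam M')"
| red_appL: "red c M M' \<Longrightarrow> red c (App M N) (App M' N)"
| red_appR: "red c N N' \<Longrightarrow> red c (App M N) (App M N')"
| red_op: "red c M M' \<Longrightarrow> red c (Op g (xs @ M # ys)) (Op g (xs @ M' # ys))"

text \<open>Choice of surface contexts: head contexts (for beta), or weak / left / right contexts (for beta_v).\<close>
datatype surface = Head | Weak | Left | Right

inductive sred :: "calculus \<Rightarrow> surface \<Rightarrow> 'o tm \<Rightarrow> 'o tm \<Rightarrow> bool" for c sf where
  s_root: "root c M M' \<Longrightarrow> sred c sf M M'"
| s_head_lam: "sf = Head \<Longrightarrow> sred c sf M M' \<Longrightarrow> sred c sf (Lam M) (Lam M')"
| s_head_app: "sf = Head \<Longrightarrow> sred c sf M M' \<Longrightarrow> sred c sf (App M N) (App M' N)"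
| s_weak_appL: "sf = Weak \<Longrightarrow> sred c sf M M' \<Longrightarrow> sred c sf (App M N) (App M' N)"
| s_weak_appR: "sf = Weak \<Longrightarrow> sred c sf N N' \<Longrightarrow> sred c sf (App M N) (App M N')"
| s_left_appL: "sf = Left \<Longrightarrow> sred c sf M M' \<Longrightarrow> sred c sf (App M N) (App M' N)"
| s_left_appR: "sf = Left \<Longrightarrow> is_val V \<Longrightarrow> sred c sf N N' \<Longrightarrow> sred c sf (App V N) (App V N')"
| s_right_appR: "sf = Right \<Longrightarrow> sred c sf N N' \<Longrightarrow> sred c sf (App M N) (App M N')"
| s_right_appL: "sf = Right \<Longrightarrow> is_val V \<Longrightarrow> sred c sf M M' \<Longrightarrow> sred c sf (App M V) (App M' V)"

definition normal :: "('a \<Rightarrow> 'a \<Rightarrow> bool) \<Rightarrow> 'a \<Rightarrow> bool" where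
  "normal r t \<longleftrightarrow> (\<nexists>u. r t u)"

fun admissible :: "calculus \<Rightarrow> surface \<Rightarrow> bool" where
  "admissible Beta sf = (sf = Head)"
| "admissible BetaV sf = (sf \<noteq> Head)"

inductive ured :: "calculus \<Rightarrow> surface \<Rightarrow> 'o tm \<Rightarrow> 'o tm \<Rightarrow> bool" for c sf where
  u_surf: "sred c sf M M' \<Longrightarrow> ured c sf M M'"
| u_lam: "normal (sred c sf) (Lam P) \<Longrightarrow> ured c sf P P' \<Longrightarrow> ured c sf (Lam P) (Lam P')"
| u_appL: "normal (sred c sf) (App P Q) \<Longrightarrow> ured c sf P P' \<Longrightarrow> ured c sf (App P Q) (App P' Q)"
| u_appR: "normal (sred c sf) (App P Q) \<Longrightarrow> ured c sf Q Q' \<Longrightarrow> ured c sf (App P Q) (App P Q')"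
| u_op: "normal (sred c sf) (Op g (xs @ P # ys)) \<Longrightarrow> ured c sf P P' \<Longrightarrow>
          ured c sf (Op g (xs @ P # ys)) (Op g (xs @ P' # ys))"

definition normalizing_strategy_on :: "'a set \<Rightarrow> ('a \<Rightarrow> 'a \<Rightarrow> bool) \<Rightarrow> ('a \<Rightarrow> 'a \<Rightarrow> bool) \<Rightarrow> bool" where
  "normalizing_strategy_on A s r \<longleftrightarrow>
     (\<forall>t\<in>A. \<forall>u. s t u \<longrightarrow> r t u) \<and>
     (\<forall>t\<in>A. normal s t \<longleftrightarrow> normal r t) \<and>
     (\<forall>t\<in>A. (\<exists>u. r\<^sup>*\<^sup>* t u \<and> normal r u) \<longrightarrow>
        (\<nexists>f. f 0 = t \<and> (\<forall>n. s (f n) (f (Suc n)))) \<and>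
        (\<forall>u. s\<^sup>*\<^sup>* t u \<and> normal s u \<longrightarrow> normal r u))"

end

theory Submission
  imports Defs
begin

lemma lift_lift:
  "i < k + 1 \<Longrightarrow> lift (Suc k) (lift i t) = lift i (lift k t)"
  by (induct t arbitrary: i k) auto

lemma lift_subst [simp]:
  "j < i + 1 \<Longrightarrow> lift i (subst t j s) = subst (lift (i + 1) t) j (lift i s)"
  by (induct t arbitrary: i j s) (simp_all add: diff_Suc lift_lift split: nat.split)

lemma lift_subst_lt:
  "i < j + 1 \<Longrightarrow> lift i (subst t j s) = subst (lift i t) (j + 1) (lift i s)"
  by (induct t arbitrary: i j s) (auto simp add: lift_lift)

lemma subst_lift [simp]: "subst (lift k t) k s = t"
  by (induct t arbitrary: k s) (simp_all add: map_idI)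

lemma subst_subst:
  "i < j + 1 \<Longrightarrow> subst (subst t (Suc j) (lift i v)) i (subst u j v) = subst (subst t i u) j v"
  by (induct t arbitrary: i j u v)
    (simp_all add: diff_Suc lift_lift [symmetric] lift_subst_lt split: nat.split)

fun is_lam :: "'o tm \<Rightarrow> bool" where
  "is_lam (Lam _) = True"
| "is_lam _ = False"

lemma is_val_lift[simp]: "is_val (lift k t) = is_val t"
  by (cases t) auto

lemma is_lam_lift[simp]: "is_lam (lift k t) = is_lam t"
  by (cases t) auto

lemma is_val_subst: "is_val t \<Longrightarrow> is_val u \<Longrightarrow> is_val (subst t k u)"
  by (cases t) auto

lemma is_lam_val: "is_lam t \<Longrightarrow> is_val t"
  by (cases t) auto

inductive par :: "calculus \<Rightarrow> 'o tm \<Rightarrow> 'o tm \<Rightarrow> bool" for c where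
  p_var: "par c (Var i) (Var i)"
| p_lam: "par c M M' \<Longrightarrow> par c (Lam M) (Lam M')"
| p_app: "par c M M' \<Longrightarrow> par c N N' \<Longrightarrow> par c (App M N) (App M' N')"
| p_op: "list_all2 (par c) ts ts' \<Longrightarrow> par c (Op g ts) (Op g ts')"
| p_beta: "par c M M' \<Longrightarrow> par c N N' \<Longrightarrow> (c = BetaV \<longrightarrow> is_val N) \<Longrightarrow>
     par c (App (Lam M) N) (subst M' 0 N')"
monos list_all2_mono

lemma par_refl[simp, intro]: "par c t t"
proof (induct t)
  case (Op g ts) then show ?case by (auto intro!: p_op list.rel_refl_strong)
qed (auto intro: par.intros)

lemma par_val: "par c V V' \<Longrightarrow> is_val V \<Longrightarrow> is_val V'"
  by (induct rule: par.induct) auto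

lemma par_lift: "par c M M' \<Longrightarrow> par c (lift k M) (lift k M')"
proof (induct arbitrary: k rule: par.induct)
  case (p_op ts ts' g)
  then show ?case by (auto intro!: par.p_op simp: list_all2_map1 list_all2_map2 elim!: list_all2_mono)
next
  case (p_beta M M' N N')
  then show ?case using par.p_beta[of c "lift (Suc k) M" "lift (Suc k) M'" "lift k N" "lift k N'"]
    by simp
qed (auto intro: par.intros)

lemma par_subst: "par c M M' \<Longrightarrow> par c N N' \<Longrightarrow> (c = BetaV \<longrightarrow> is_val N) \<Longrightarrow>
   par c (subst M j N) (subst M' j N')"
proof (induct arbitrary: j N N' rule: par.induct)
  case (p_var i)
  then show ?case by auto
next
  case (p_lam M M')
  have "par c (subst M (Suc j) (lift 0 N)) (subst M' (Suc j) (lift 0 N'))"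
    by (rule p_lam.hyps(2)) (use p_lam.prems in \<open>auto intro: par_lift\<close>)
  then show ?case by (auto intro!: par.p_lam)
next
  case (p_app M M' N N')
  then show ?case by (auto intro!: par.p_app)
next
  case (p_op ts ts' g)
  then show ?case by (auto intro!: par.p_op simp: list_all2_map1 list_all2_map2 elim!: list_all2_mono)
next
  case (p_beta M M' B B')
  have h1: "par c (subst M (Suc j) (lift 0 N)) (subst M' (Suc j) (lift 0 N'))"
    by (rule p_beta.hyps(2)) (use p_beta.prems in \<open>auto intro: par_lift\<close>)
  have "par c (App (Lam (subst M (Suc j) (lift 0 N))) (subst B j N))
     (subst (subst M' (Suc j) (lift 0 N')) 0 (subst B' j N'))"
    using p_beta h1 by (intro par.p_beta) (auto intro: par_lift is_val_subst)
  then show ?case using subst_subst[of 0 j M' N' B'] by simp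
qed

lemma sred_red: "sred c sf M M' \<Longrightarrow> red c M M'"
  by (induct rule: sred.induct) (auto intro: red.intros)

lemma root_inv: "root c M M' \<Longrightarrow> \<exists>A B. M = App (Lam A) B \<and> M' = subst A 0 B \<and> (c = BetaV \<longrightarrow> is_val B)"
  by (cases "(c,M,M')" rule: root.cases) auto

lemma root_intro: "(c = BetaV \<longrightarrow> is_val B) \<Longrightarrow> root c (App (Lam A) B) (subst A 0 B)"
  by (cases c) auto

lemma red_par: "red c M M' \<Longrightarrow> par c M M'"
proof (induct rule: red.induct)
  case (red_root M M')
  then show ?case by (auto dest!: root_inv intro: par.intros)
next
  case (red_op M M' g xs ys)
  then show ?case by (auto intro!: par.p_op list_all2_appendI list.rel_refl_strong)
qed (auto intro: par.intros)

lemma reds_lam: "(red c)\<^sup>*\<^sup>* M M' \<Longrightarrow> (red c)\<^sup>*\<^sup>* (Lam M) (Lam M')"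
  by (induct rule: rtranclp_induct) (auto intro: rtranclp.rtrancl_into_rtrancl red.intros)

lemma reds_appL: "(red c)\<^sup>*\<^sup>* M M' \<Longrightarrow> (red c)\<^sup>*\<^sup>* (App M N) (App M' N)"
  by (induct rule: rtranclp_induct) (auto intro: rtranclp.rtrancl_into_rtrancl red.intros)

lemma reds_appR: "(red c)\<^sup>*\<^sup>* N N' \<Longrightarrow> (red c)\<^sup>*\<^sup>* (App M N) (App M N')"
  by (induct rule: rtranclp_induct) (auto intro: rtranclp.rtrancl_into_rtrancl red.intros)

lemma reds_op1: "(red c)\<^sup>*\<^sup>* M M' \<Longrightarrow> (red c)\<^sup>*\<^sup>* (Op g (xs @ M # ys)) (Op g (xs @ M' # ys))"
  by (induct rule: rtranclp_induct) (auto intro: rtranclp.rtrancl_into_rtrancl red.intros)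

lemma reds_op: "list_all2 (red c)\<^sup>*\<^sup>* ts ts' \<Longrightarrow> (red c)\<^sup>*\<^sup>* (Op g (xs @ ts)) (Op g (xs @ ts'))"
proof (induct arbitrary: xs rule: list_all2_induct)
  case Nil
  then show ?case by simp
next
  case (Cons x ts x' ts')
  have "(red c)\<^sup>*\<^sup>* (Op g (xs @ x # ts)) (Op g (xs @ x' # ts))"
    using Cons(1) by (rule reds_op1)
  moreover have "(red c)\<^sup>*\<^sup>* (Op g ((xs @ [x']) @ ts)) (Op g ((xs @ [x']) @ ts'))"
    using Cons by blast
  ultimately show ?case by simp
qed

lemma par_reds: "par c M M' \<Longrightarrow> (red c)\<^sup>*\<^sup>* M M'"
proof (induct rule: par.induct)
  case (p_app M M' N N')
  then show ?case by (meson reds_appL reds_appR rtranclp_trans)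
next
  case (p_op ts ts' g)
  have "list_all2 (red c)\<^sup>*\<^sup>* ts ts'" using p_op by (auto elim!: list_all2_mono)
  then show ?case using reds_op[of c ts ts' g "[]"] by simp
next
  case (p_beta M M' N N')
  have "(red c)\<^sup>*\<^sup>* (App (Lam M) N) (App (Lam M') N')"
    using p_beta by (meson reds_lam reds_appL reds_appR rtranclp_trans)
  moreover have "red c (App (Lam M') N') (subst M' 0 N')"
    using p_beta par_val by (auto intro!: red_root root_intro)
  ultimately show ?case by auto
qed (auto intro: reds_lam)

lemma pars_reds: "(par c)\<^sup>*\<^sup>* M M' \<Longrightarrow> (red c)\<^sup>*\<^sup>* M M'"
  by (induct rule: rtranclp_induct) (auto dest: par_reds)

inductive ipar :: "calculus \<Rightarrow> surface \<Rightarrow> 'o tm \<Rightarrow> 'o tm \<Rightarrow> bool" for c sf where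
  i_var: "ipar c sf (Var i) (Var i)"
| i_lam_head: "sf = Head \<Longrightarrow> ipar c sf M M' \<Longrightarrow> ipar c sf (Lam M) (Lam M')"
| i_lam: "sf \<noteq> Head \<Longrightarrow> par c M M' \<Longrightarrow> ipar c sf (Lam M) (Lam M')"
| i_app_head: "sf = Head \<Longrightarrow> ipar c sf M M' \<Longrightarrow> par c N N' \<Longrightarrow> ipar c sf (App M N) (App M' N')"
| i_app_weak: "sf = Weak \<Longrightarrow> ipar c sf M M' \<Longrightarrow> ipar c sf N N' \<Longrightarrow> ipar c sf (App M N) (App M' N')"
| i_app_left: "sf = Left \<Longrightarrow> ipar c sf M M' \<Longrightarrow> par c N N' \<Longrightarrow> (is_val M \<longrightarrow> ipar c sf N N') \<Longrightarrow>
    ipar c sf (App M N) (App M' N')"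
| i_app_right: "sf = Right \<Longrightarrow> ipar c sf N N' \<Longrightarrow> par c M M' \<Longrightarrow> (is_val N \<longrightarrow> ipar c sf M M') \<Longrightarrow>
    ipar c sf (App M N) (App M' N')"
| i_op: "list_all2 (par c) ts ts' \<Longrightarrow> ipar c sf (Op g ts) (Op g ts')"

lemma ipar_par: "ipar c sf M N \<Longrightarrow> par c M N"
  by (induct rule: ipar.induct) (auto intro: par.intros)

lemma ipar_val: "ipar c sf M N \<Longrightarrow> is_val N = is_val M \<and> is_lam N = is_lam M"
  by (cases rule: ipar.cases) auto

lemma ipar_lift: "ipar c sf M N \<Longrightarrow> ipar c sf (lift k M) (lift k N)"
proof (induct arbitrary: k rule: ipar.induct)
  case (i_op ts ts' g)
  then show ?case by (auto intro!: ipar.i_op simp: list_all2_map1 list_all2_map2 elim!: list_all2_mono intro: par_lift)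
qed (auto intro: ipar.intros par_lift)

lemma par_lam_inv: "par c (Lam A) T \<Longrightarrow> \<exists>A'. T = Lam A' \<and> par c A A'"
  by (cases rule: par.cases) auto

lemma par_op_inv: "par c (Op g ts) T \<Longrightarrow> \<exists>ts'. T = Op g ts' \<and> list_all2 (par c) ts ts'"
  by (cases rule: par.cases) auto

lemma ipar_op: "par c (Op g ts) T \<Longrightarrow> ipar c sf (Op g ts) T"
  by (auto dest!: par_op_inv intro: ipar.i_op)

lemma ipar_lam: "par c (Lam A) T \<Longrightarrow> sf \<noteq> Head \<Longrightarrow> ipar c sf (Lam A) T"
  by (auto dest!: par_lam_inv intro: ipar.i_lam)

lemma sred_lift: "sred c sf M N \<Longrightarrow> sred c sf (lift k M) (lift k N)"
proof (induct arbitrary: k rule: sred.induct)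
  case (s_root M M')
  then show ?case by (auto dest!: root_inv intro!: sred.s_root root_intro)
qed (auto intro: sred.intros)

lemma sreds_ctx: "r\<^sup>*\<^sup>* a b \<Longrightarrow> (\<And>a b. r a b \<Longrightarrow> r (f a) (f b)) \<Longrightarrow> r\<^sup>*\<^sup>* (f a) (f b)"
  by (induct rule: rtranclp_induct) (auto intro: rtranclp.rtrancl_into_rtrancl)

lemma sreds_lift: "(sred c sf)\<^sup>*\<^sup>* M N \<Longrightarrow> (sred c sf)\<^sup>*\<^sup>* (lift k M) (lift k N)"
  by (erule sreds_ctx[where f="lift k"]) (auto intro: sred_lift)

lemma adm_val: "admissible c sf \<Longrightarrow> sf \<noteq> Head \<Longrightarrow> c = BetaV"
  by (cases c) auto

lemma sred_subst: "sred c sf M M' \<Longrightarrow> admissible c sf \<Longrightarrow> (c = BetaV \<longrightarrow> is_val N) \<Longrightarrow>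
  sred c sf (subst M j N) (subst M' j N)"
proof (induct arbitrary: j N rule: sred.induct)
  case (s_root M M')
  then obtain A B where AB: "M = App (Lam A) B" "M' = subst A 0 B" "c = BetaV \<longrightarrow> is_val B"
    by (auto dest!: root_inv)
  have "sred c sf (App (Lam (subst A (Suc j) (lift 0 N))) (subst B j N))
     (subst (subst A (Suc j) (lift 0 N)) 0 (subst B j N))"
    using AB s_root by (auto intro!: sred.s_root root_intro is_val_subst)
  then show ?case using AB subst_subst[of 0 j A N B] by simp
next
  case (s_head_lam M M')
  then show ?case by (auto intro!: sred.s_head_lam)
next
  case (s_left_appR V N M')
  then show ?case using adm_val[of c sf] by (auto intro!: sred.s_left_appR is_val_subst)
next
  case (s_right_appL V M M')
  then show ?case using adm_val[of c sf] by (auto intro!: sred.s_right_appL is_val_subst)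
qed (auto intro: sred.intros)

lemma sreds_subst: "(sred c sf)\<^sup>*\<^sup>* M M' \<Longrightarrow> admissible c sf \<Longrightarrow> (c = BetaV \<longrightarrow> is_val N) \<Longrightarrow>
  (sred c sf)\<^sup>*\<^sup>* (subst M j N) (subst M' j N)"
  by (erule sreds_ctx[where f="\<lambda>t. subst t j N"]) (auto intro: sred_subst)

lemma val_sred_head: "sred c sf t u \<Longrightarrow> is_val t \<Longrightarrow> sf = Head"
  by (induct rule: sred.induct) (auto dest: root_inv)

lemma val_no_sred: "is_val t \<Longrightarrow> sf \<noteq> Head \<Longrightarrow> \<not> sred c sf t u"
  using val_sred_head by blast

lemma val_no_sreds: "(sred c sf)\<^sup>*\<^sup>* t u \<Longrightarrow> is_val t \<Longrightarrow> sf \<noteq> Head \<Longrightarrow> u = t"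
  by (induct rule: converse_rtranclp_induct) (auto dest: val_no_sred)

lemma is_val_subst_iff: "is_val N \<Longrightarrow> is_val (subst M j N) = is_val M"
  by (cases M) auto

abbreviation splitp :: "calculus \<Rightarrow> surface \<Rightarrow> 'o tm \<Rightarrow> 'o tm \<Rightarrow> bool" where
  "splitp c sf N N' \<equiv> \<exists>X. (sred c sf)\<^sup>*\<^sup>* N X \<and> ipar c sf X N'"

lemma splitp_lift: "splitp c sf N N' \<Longrightarrow> splitp c sf (lift k N) (lift k N')"
  by (auto intro: sreds_lift ipar_lift)

lemma sreds_lam_head: "(sred c sf)\<^sup>*\<^sup>* M M' \<Longrightarrow> sf = Head \<Longrightarrow> (sred c sf)\<^sup>*\<^sup>* (Lam M) (Lam M')"
  by (erule sreds_ctx[where f=Lam]) (auto intro: sred.intros)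

lemma sreds_appL: "(sred c sf)\<^sup>*\<^sup>* M M' \<Longrightarrow> sf = Head \<or> sf = Weak \<or> sf = Left \<or> (sf = Right \<and> is_val N) \<Longrightarrow>
   (sred c sf)\<^sup>*\<^sup>* (App M N) (App M' N)"
  by (erule sreds_ctx[where f="\<lambda>t. App t N"]) (auto intro: sred.intros)

lemma sreds_appR: "(sred c sf)\<^sup>*\<^sup>* N N' \<Longrightarrow> sf = Weak \<or> sf = Right \<or> (sf = Left \<and> is_val M) \<Longrightarrow>
   (sred c sf)\<^sup>*\<^sup>* (App M N) (App M N')"
  by (erule sreds_ctx[where f="\<lambda>t. App M t"]) (auto intro: sred.intros)

lemma lemmaL:
  "ipar c sf M M' \<Longrightarrow> admissible c sf \<Longrightarrow> par c N N' \<Longrightarrow> (c = BetaV \<longrightarrow> is_val N) \<Longrightarrow>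
   splitp c sf N N' \<Longrightarrow> splitp c sf (subst M j N) (subst M' j N')"
proof (induct arbitrary: j N N' rule: ipar.induct)
  case (i_var i)
  then show ?case by (auto intro: ipar.i_var)
next
  case (i_lam_head M M')
  have "splitp c sf (subst M (Suc j) (lift 0 N)) (subst M' (Suc j) (lift 0 N'))"
    by (rule i_lam_head.hyps(3)) (use i_lam_head.prems in \<open>auto intro: par_lift splitp_lift\<close>)
  then show ?case using i_lam_head.hyps(1) by (auto intro: sreds_lam_head ipar.i_lam_head)
next
  case (i_lam M M')
  have "par c (subst (Lam M) j N) (subst (Lam M') j N')"
    using i_lam by (intro par_subst) (auto intro: par.intros)
  then have "par c (Lam (subst M (Suc j) (lift 0 N))) (subst (Lam M') j N')" by simp
  then show ?case using i_lam.hyps(1) by (intro exI[of _ "subst (Lam M) j N"]) (auto intro!: ipar_lam)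
next
  case (i_app_head M M' Q Q')
  obtain X where X: "(sred c sf)\<^sup>*\<^sup>* (subst M j N) X" "ipar c sf X (subst M' j N')"
    using i_app_head.hyps(3)[OF i_app_head.prems] by blast
  have "par c (subst Q j N) (subst Q' j N')"
    using i_app_head by (intro par_subst) auto
  then show ?case using X i_app_head.hyps(1)
    by (auto intro!: exI[of _ "App X (subst Q j N)"] sreds_appL ipar.i_app_head)
next
  case (i_app_weak M M' Q Q')
  obtain X where X: "(sred c sf)\<^sup>*\<^sup>* (subst M j N) X" "ipar c sf X (subst M' j N')"
    using i_app_weak.hyps(3)[OF i_app_weak.prems] by blast
  obtain Y where Y: "(sred c sf)\<^sup>*\<^sup>* (subst Q j N) Y" "ipar c sf Y (subst Q' j N')"
    using i_app_weak.hyps(5)[OF i_app_weak.prems] by blast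
  have "(sred c sf)\<^sup>*\<^sup>* (App (subst M j N) (subst Q j N)) (App X (subst Q j N))"
    using X i_app_weak.hyps(1) by (intro sreds_appL) auto
  also have "(sred c sf)\<^sup>*\<^sup>* (App X (subst Q j N)) (App X Y)"
    using Y i_app_weak.hyps(1) by (intro sreds_appR) auto
  finally show ?case using X Y i_app_weak.hyps(1) by (auto intro!: ipar.i_app_weak)
next
  case (i_app_left M M' Q Q')
  have cv: "c = BetaV" using i_app_left adm_val by auto
  obtain X where X: "(sred c sf)\<^sup>*\<^sup>* (subst M j N) X" "ipar c sf X (subst M' j N')"
    using i_app_left.hyps(3)[OF i_app_left.prems] by blast
  have pq: "par c (subst Q j N) (subst Q' j N')"
    using i_app_left by (intro par_subst) auto
  show ?case
  proof (cases "is_val M")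
    case True
    then have vs: "is_val (subst M j N)" using cv i_app_left.prems is_val_subst by auto
    then have XX: "X = subst M j N" using X val_no_sreds i_app_left.hyps(1) by auto
    obtain Y where Y: "(sred c sf)\<^sup>*\<^sup>* (subst Q j N) Y" "ipar c sf Y (subst Q' j N')"
      using i_app_left.hyps(5) True i_app_left.prems by blast
    have "(sred c sf)\<^sup>*\<^sup>* (App (subst M j N) (subst Q j N)) (App X Y)"
      using Y i_app_left.hyps(1) XX vs by (auto intro: sreds_appR)
    then show ?thesis using X Y XX vs i_app_left.hyps(1) by (auto intro!: ipar.i_app_left ipar_par)
  next
    case False
    have "\<not> is_val (subst M' j N')" using False ipar_val[OF i_app_left.hyps(2)] by (cases M') auto
    then have "\<not> is_val X" using ipar_val[OF X(2)] by simp
    moreover have "(sred c sf)\<^sup>*\<^sup>* (App (subst M j N) (subst Q j N)) (App X (subst Q j N))"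
      using X i_app_left.hyps(1) by (intro sreds_appL) auto
    ultimately show ?thesis using X pq i_app_left.hyps(1) by (auto intro!: ipar.i_app_left)
  qed
next
  case (i_app_right Q Q' M M')
  have cv: "c = BetaV" using i_app_right adm_val by auto
  obtain X where X: "(sred c sf)\<^sup>*\<^sup>* (subst Q j N) X" "ipar c sf X (subst Q' j N')"
    using i_app_right.hyps(3)[OF i_app_right.prems] by blast
  have pm: "par c (subst M j N) (subst M' j N')"
    using i_app_right by (intro par_subst) auto
  have s1: "(sred c sf)\<^sup>*\<^sup>* (App (subst M j N) (subst Q j N)) (App (subst M j N) X)"
    using X i_app_right.hyps(1) by (intro sreds_appR) auto
  show ?case
  proof (cases "is_val Q")
    case True
    then have vs: "is_val (subst Q j N)" using cv i_app_right.prems is_val_subst by auto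
    then have XX: "X = subst Q j N" using X val_no_sreds i_app_right.hyps(1) by auto
    obtain Y where Y: "(sred c sf)\<^sup>*\<^sup>* (subst M j N) Y" "ipar c sf Y (subst M' j N')"
      using i_app_right.hyps(5) True i_app_right.prems by blast
    have "(sred c sf)\<^sup>*\<^sup>* (App (subst M j N) X) (App Y X)"
      using Y i_app_right.hyps(1) XX vs by (auto intro: sreds_appL)
    then have "(sred c sf)\<^sup>*\<^sup>* (App (subst M j N) (subst Q j N)) (App Y X)" using s1 by auto
    then show ?thesis using X Y XX vs i_app_right.hyps(1) by (auto intro!: ipar.i_app_right ipar_par)
  next
    case False
    have "\<not> is_val (subst Q' j N')" using False ipar_val[OF i_app_right.hyps(2)] by (cases Q') auto
    then have "\<not> is_val X" using ipar_val[OF X(2)] by simp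
    then show ?thesis using X pm s1 i_app_right.hyps(1) by (auto intro!: ipar.i_app_right)
  qed
next
  case (i_op ts ts' g)
  have "par c (subst (Op g ts) j N) (subst (Op g ts') j N')"
    using i_op by (intro par_subst) (auto intro: par.intros)
  then have "par c (Op g (map (\<lambda>t. subst t j N) ts)) (subst (Op g ts') j N')" by simp
  then show ?case by (intro exI[of _ "subst (Op g ts) j N"]) (auto intro!: ipar_op)
qed

lemma split_lemma: "par c M M' \<Longrightarrow> admissible c sf \<Longrightarrow> splitp c sf M M'"
proof (induct rule: par.induct)
  case (p_var i)
  then show ?case by (auto intro: ipar.i_var)
next
  case (p_lam M M')
  show ?case
  proof (cases "sf = Head")
    case True
    then show ?thesis using p_lam by (auto intro: sreds_lam_head ipar.i_lam_head)
  next
    case False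
    then show ?thesis using p_lam by (auto intro!: ipar_lam par.p_lam)
  qed
next
  case (p_app M M' N N')
  obtain X where X: "(sred c sf)\<^sup>*\<^sup>* M X" "ipar c sf X M'" using p_app by blast
  obtain Y where Y: "(sred c sf)\<^sup>*\<^sup>* N Y" "ipar c sf Y N'" using p_app by blast
  show ?case
  proof (cases sf)
    case Head
    then show ?thesis using X p_app
      by (auto intro!: exI[of _ "App X N"] sreds_appL ipar.i_app_head)
  next
    case Weak
    have "(sred c sf)\<^sup>*\<^sup>* (App M N) (App X N)" using X Weak by (intro sreds_appL) auto
    also have "(sred c sf)\<^sup>*\<^sup>* (App X N) (App X Y)" using Y Weak by (intro sreds_appR) auto
    finally show ?thesis using X Y Weak by (auto intro!: ipar.i_app_weak)
  next
    case Left
    have s1: "(sred c sf)\<^sup>*\<^sup>* (App M N) (App X N)" using X Left by (intro sreds_appL) auto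
    show ?thesis
    proof (cases "is_val X")
      case True
      have "(sred c sf)\<^sup>*\<^sup>* (App X N) (App X Y)" using Y Left True by (intro sreds_appR) auto
      with s1 have "(sred c sf)\<^sup>*\<^sup>* (App M N) (App X Y)" by auto
      then show ?thesis using X Y Left True by (auto intro!: ipar.i_app_left ipar_par)
    next
      case False
      then show ?thesis using s1 X p_app Left by (auto intro!: ipar.i_app_left)
    qed
  next
    case Right
    have s1: "(sred c sf)\<^sup>*\<^sup>* (App M N) (App M Y)" using Y Right by (intro sreds_appR) auto
    show ?thesis
    proof (cases "is_val Y")
      case True
      have "(sred c sf)\<^sup>*\<^sup>* (App M Y) (App X Y)" using X Right True by (intro sreds_appL) auto
      with s1 have "(sred c sf)\<^sup>*\<^sup>* (App M N) (App X Y)" by auto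
      then show ?thesis using X Y Right True by (auto intro!: ipar.i_app_right ipar_par)
    next
      case False
      then show ?thesis using s1 Y p_app Right by (auto intro!: ipar.i_app_right)
    qed
  qed
next
  case (p_op ts ts' g)
  have "list_all2 (par c) ts ts'" using p_op(1) by (auto elim!: list_all2_mono)
  then show ?case by (auto intro!: ipar_op par.p_op)
next
  case (p_beta M M' N N')
  obtain X where X: "(sred c sf)\<^sup>*\<^sup>* M X" "ipar c sf X M'" using p_beta by blast
  have "sred c sf (App (Lam M) N) (subst M 0 N)"
    using p_beta by (auto intro!: sred.s_root root_intro)
  moreover have "(sred c sf)\<^sup>*\<^sup>* (subst M 0 N) (subst X 0 N)"
    using X p_beta by (auto intro: sreds_subst)
  moreover have "splitp c sf (subst X 0 N) (subst M' 0 N')"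
    using X p_beta by (intro lemmaL) auto
  ultimately show ?case by (meson converse_rtranclp_into_rtranclp rtranclp_trans)
qed

lemma ipar_app_inv: "ipar c sf M (App N1 N2) \<Longrightarrow> \<exists>M1 M2. M = App M1 M2 \<and>
  (sf = Head \<longrightarrow> ipar c sf M1 N1 \<and> par c M2 N2) \<and>
  (sf = Weak \<longrightarrow> ipar c sf M1 N1 \<and> ipar c sf M2 N2) \<and>
  (sf = Left \<longrightarrow> ipar c sf M1 N1 \<and> par c M2 N2 \<and> (is_val M1 \<longrightarrow> ipar c sf M2 N2)) \<and>
  (sf = Right \<longrightarrow> ipar c sf M2 N2 \<and> par c M1 N1 \<and> (is_val M2 \<longrightarrow> ipar c sf M1 N1))"
  by (cases rule: ipar.cases) auto

lemma ipar_lam_inv: "ipar c sf M (Lam N1) \<Longrightarrow> \<exists>M1. M = Lam M1 \<and> par c M1 N1 \<and>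
  (sf = Head \<longrightarrow> ipar c sf M1 N1)"
  by (cases rule: ipar.cases) (auto intro: ipar_par)

lemma merge: "sred c sf N P \<Longrightarrow> ipar c sf M N \<Longrightarrow> admissible c sf \<Longrightarrow> par c M P"
proof (induct arbitrary: M rule: sred.induct)
  case (s_root N P)
  then obtain A' B' where AB: "N = App (Lam A') B'" "P = subst A' 0 B'" "c = BetaV \<longrightarrow> is_val B'"
    by (auto dest!: root_inv)
  obtain M1 M2 where M: "M = App M1 M2" and h: "(sf = Head \<longrightarrow> ipar c sf M1 (Lam A') \<and> par c M2 B') \<and>
  (sf = Weak \<longrightarrow> ipar c sf M1 (Lam A') \<and> ipar c sf M2 B') \<and>
  (sf = Left \<longrightarrow> ipar c sf M1 (Lam A') \<and> par c M2 B' \<and> (is_val M1 \<longrightarrow> ipar c sf M2 B')) \<and>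
  (sf = Right \<longrightarrow> ipar c sf M2 B' \<and> par c M1 (Lam A') \<and> (is_val M2 \<longrightarrow> ipar c sf M1 (Lam A')))"
    using ipar_app_inv[OF s_root.prems(1)[unfolded AB]] by blast
  have cv: "sf \<noteq> Head \<Longrightarrow> c = BetaV" using s_root.prems adm_val by auto
  have i1: "ipar c sf M1 (Lam A')"
    using h AB(3) cv ipar_val by (cases sf) auto
  then obtain A where A: "M1 = Lam A" "par c A A'" by (auto dest: ipar_lam_inv)
  have p2: "par c M2 B'" using h by (cases sf) (auto intro: ipar_par)
  have v2: "c = BetaV \<longrightarrow> is_val M2"
  proof
    assume "c = BetaV"
    then have "sf \<noteq> Head" using s_root.prems by auto
    then have "ipar c sf M2 B'" using h A by (cases sf) auto
    then show "is_val M2" using AB(3) \<open>c = BetaV\<close> ipar_val by auto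
  qed
  show ?case using A p2 v2 M AB by (auto intro: par.p_beta)
next
  case (s_head_lam M0 M0')
  then show ?case by (auto dest!: ipar_lam_inv intro: par.p_lam)
next
  case (s_head_app M1 M1' N1)
  then show ?case by (auto dest!: ipar_app_inv intro: par.p_app ipar_par)
next
  case (s_weak_appL M1 M1' N1)
  then show ?case by (auto dest!: ipar_app_inv intro: par.p_app ipar_par)
next
  case (s_weak_appR N1 N1' M1)
  then show ?case by (auto dest!: ipar_app_inv intro: par.p_app ipar_par)
next
  case (s_left_appL M1 M1' N1)
  then show ?case by (auto dest!: ipar_app_inv intro: par.p_app ipar_par)
next
  case (s_left_appR V N1 N1')
  then show ?case by (auto dest!: ipar_app_inv dest: ipar_val intro: par.p_app ipar_par)
next
  case (s_right_appR N1 N1' M1)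
  then show ?case by (auto dest!: ipar_app_inv intro: par.p_app ipar_par)
next
  case (s_right_appL V M1 M1')
  then show ?case by (auto dest!: ipar_app_inv dest: ipar_val intro: par.p_app ipar_par)
qed

lemma ipar_app_inv2: "ipar c sf (App M1 M2) N \<Longrightarrow> \<exists>N1 N2. N = App N1 N2 \<and> par c M1 N1 \<and> par c M2 N2"
  by (cases rule: ipar.cases) (auto intro: ipar_par)

lemma ipar_app_inv3: "ipar c sf (App M1 M2) N \<Longrightarrow> \<exists>N1 N2. N = App N1 N2 \<and>
  (sf = Head \<longrightarrow> ipar c sf M1 N1) \<and>
  (sf = Weak \<longrightarrow> ipar c sf M1 N1 \<and> ipar c sf M2 N2) \<and>
  (sf = Left \<longrightarrow> ipar c sf M1 N1 \<and> (is_val M1 \<longrightarrow> ipar c sf M2 N2)) \<and>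
  (sf = Right \<longrightarrow> ipar c sf M2 N2 \<and> (is_val M2 \<longrightarrow> ipar c sf M1 N1))"
  by (cases rule: ipar.cases) auto

lemma persist: "sred c sf M M' \<Longrightarrow> ipar c sf M N \<Longrightarrow> \<exists>N'. sred c sf N N'"
proof (induct arbitrary: N rule: sred.induct)
  case (s_root M M')
  then obtain A B where AB: "M = App (Lam A) B" "c = BetaV \<longrightarrow> is_val B"
    by (auto dest!: root_inv)
  then obtain N1 N2 where N: "N = App N1 N2" "par c (Lam A) N1" "par c B N2"
    using s_root.prems ipar_app_inv2 by blast
  then obtain A' where "N1 = Lam A'" by (auto dest: par_lam_inv)
  moreover have "c = BetaV \<longrightarrow> is_val N2" using AB N par_val by auto
  ultimately show ?case using N by (auto intro!: sred.s_root root_intro)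
next
  case (s_head_lam M1 M1')
  from s_head_lam.prems s_head_lam.hyps(1) obtain N1 where "N = Lam N1" "ipar c sf M1 N1"
    by (cases rule: ipar.cases) auto
  then show ?case using s_head_lam by (auto intro: sred.intros)
next
  case (s_head_app M1 M1' N1)
  from s_head_app.prems s_head_app.hyps(1) obtain P Q where "N = App P Q" "ipar c sf M1 P"
    by (cases rule: ipar.cases) auto
  moreover obtain a where "sred c sf P a" using s_head_app.hyps(3) calculation by blast
  ultimately show ?case using s_head_app.hyps(1) by (blast intro: sred.s_head_app)
next
  case (s_weak_appL M1 M1' N1)
  obtain P Q where PQ: "N = App P Q" "ipar c sf M1 P"
    using s_weak_appL.prems s_weak_appL.hyps ipar_app_inv3 by (metis is_val.simps)
  obtain a where "sred c sf P a" using s_weak_appL.hyps PQ by blast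
  then show ?case using PQ s_weak_appL.hyps ipar_val[OF PQ(2)] by (auto intro: sred.s_weak_appL)
next
  case (s_weak_appR N1 N1' M1)
  obtain P Q where PQ: "N = App P Q" "ipar c sf N1 Q"
    using s_weak_appR.prems s_weak_appR.hyps ipar_app_inv3 by (metis is_val.simps)
  obtain a where "sred c sf Q a" using s_weak_appR.hyps PQ by blast
  then show ?case using PQ s_weak_appR.hyps ipar_val[OF PQ(2)] by (auto intro: sred.s_weak_appR)
next
  case (s_left_appL M1 M1' N1)
  obtain P Q where PQ: "N = App P Q" "ipar c sf M1 P"
    using s_left_appL.prems s_left_appL.hyps ipar_app_inv3 by (metis is_val.simps)
  obtain a where "sred c sf P a" using s_left_appL.hyps PQ by blast
  then show ?case using PQ s_left_appL.hyps ipar_val[OF PQ(2)] by (auto intro: sred.s_left_appL)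
next
  case (s_left_appR V N1 N1')
  obtain P Q where PQ: "N = App P Q" "ipar c sf N1 Q" "ipar c sf V P"
    using s_left_appR.prems s_left_appR.hyps ipar_app_inv3 by (metis is_val.simps)
  obtain a where "sred c sf Q a" using s_left_appR.hyps PQ by blast
  then show ?case using PQ s_left_appR.hyps ipar_val[OF PQ(3)] by (auto intro: sred.s_left_appR)
next
  case (s_right_appR N1 N1' M1)
  obtain P Q where PQ: "N = App P Q" "ipar c sf N1 Q"
    using s_right_appR.prems s_right_appR.hyps ipar_app_inv3 by (metis is_val.simps)
  obtain a where "sred c sf Q a" using s_right_appR.hyps PQ by blast
  then show ?case using PQ s_right_appR.hyps ipar_val[OF PQ(2)] by (auto intro: sred.s_right_appR)
next
  case (s_right_appL V M1 M1')
  obtain P Q where PQ: "N = App P Q" "ipar c sf M1 P" "ipar c sf V Q"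
    using s_right_appL.prems s_right_appL.hyps ipar_app_inv3 by (metis is_val.simps)
  obtain a where "sred c sf P a" using s_right_appL.hyps PQ by blast
  then show ?case using PQ s_right_appL.hyps ipar_val[OF PQ(3)] by (auto intro: sred.s_right_appL)
qed

lemma ipar_sreds: "(sred c sf)\<^sup>*\<^sup>* N P \<Longrightarrow> ipar c sf M N \<Longrightarrow> admissible c sf \<Longrightarrow> splitp c sf M P"
proof (induct arbitrary: M rule: converse_rtranclp_induct)
  case base
  then show ?case by auto
next
  case (step N N1)
  have "par c M N1" using merge step by blast
  then obtain X1 where X1: "(sred c sf)\<^sup>*\<^sup>* M X1" "ipar c sf X1 N1" using split_lemma step by blast
  then obtain X where "(sred c sf)\<^sup>*\<^sup>* X1 X" "ipar c sf X P" using step by blast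
  then show ?case using X1 by (meson rtranclp_trans)
qed

lemma factor: "(red c)\<^sup>*\<^sup>* t n \<Longrightarrow> admissible c sf \<Longrightarrow>
  \<exists>t0. (sred c sf)\<^sup>*\<^sup>* t t0 \<and> (ipar c sf)\<^sup>*\<^sup>* t0 n"
proof (induct rule: converse_rtranclp_induct)
  case base
  then show ?case by auto
next
  case (step t t1)
  then obtain t2 where t2: "(sred c sf)\<^sup>*\<^sup>* t1 t2" "(ipar c sf)\<^sup>*\<^sup>* t2 n" by blast
  obtain X where X: "(sred c sf)\<^sup>*\<^sup>* t X" "ipar c sf X t1"
    using split_lemma[OF red_par[OF step(1)] step(4)] by blast
  obtain X' where X': "(sred c sf)\<^sup>*\<^sup>* X X'" "ipar c sf X' t2"
    using ipar_sreds[OF t2(1) X(2) step(4)] by blast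
  show ?case using X X' t2 by (meson converse_rtranclp_into_rtranclp rtranclp_trans)
qed

lemma persists: "(ipar c sf)\<^sup>*\<^sup>* t0 n \<Longrightarrow> \<not> normal (sred c sf) t0 \<Longrightarrow> \<not> normal (sred c sf) n"
  by (induct rule: rtranclp_induct) (auto simp: normal_def dest: persist)

lemma sred_app_inv: "sred c sf (App M N) u \<Longrightarrow> root c (App M N) u \<or>
   (\<exists>M'. u = App M' N \<and> sred c sf M M' \<and> (sf = Head \<or> sf = Weak \<or> sf = Left \<or> (sf = Right \<and> is_val N))) \<or>
   (\<exists>N'. u = App M N' \<and> sred c sf N N' \<and> (sf = Weak \<or> sf = Right \<or> (sf = Left \<and> is_val M)))"
  by (cases rule: sred.cases) auto

lemma sred_lam_inv: "sred c sf (Lam M) u \<Longrightarrow> sf = Head \<and> (\<exists>M'. u = Lam M' \<and> sred c sf M M')"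
  by (cases rule: sred.cases) auto

lemma sred_var: "\<not> sred c sf (Var i) u"
  by (auto elim: sred.cases)

lemma sred_op: "\<not> sred c sf (Op g ts) u"
  by (auto elim: sred.cases)

lemma adm_head: "admissible c Head \<Longrightarrow> c = Beta"
  by (cases c) auto

lemma qd: "sred c sf t u1 \<Longrightarrow> sred c sf t u2 \<Longrightarrow> u1 \<noteq> u2 \<Longrightarrow> admissible c sf \<Longrightarrow>
  \<exists>v. sred c sf u1 v \<and> sred c sf u2 v"
proof (induct t arbitrary: u1 u2)
  case (Var x)
  then show ?case by (simp add: sred_var)
next
  case (Lam M)
  then obtain M1 M2 where "u1 = Lam M1" "u2 = Lam M2" "sred c sf M M1" "sred c sf M M2" "sf = Head"
    by (auto dest!: sred_lam_inv)
  moreover obtain v where "sred c sf M1 v" "sred c sf M2 v" using Lam calculation by blast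
  ultimately show ?case by (blast intro: sred.s_head_lam)
next
  case (App M N)
  have rootcase: "\<exists>v. sred c sf u1 v \<and> sred c sf u2 v"
    if r: "root c (App M N) u1" and s2: "sred c sf (App M N) u2" and ne: "u1 \<noteq> u2"
      and adm: "admissible c sf" for u1 u2
  proof -
    obtain A where A: "M = Lam A" "u1 = subst A 0 N" "c = BetaV \<longrightarrow> is_val N"
      using r by (auto dest!: root_inv)
    consider "root c (App M N) u2"
      | M' where "u2 = App M' N" "sred c sf M M'"
      | N' where "u2 = App M N'" "sred c sf N N'" "sf \<noteq> Head"
      using sred_app_inv[OF s2] by blast
    then show ?thesis
    proof cases
      case 1
      then show ?thesis using r ne by (auto dest!: root_inv)
    next
      case 2
      then obtain A' where "sf = Head" "M' = Lam A'" "sred c sf A A'" using A by (auto dest!: sred_lam_inv)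
      moreover have "c = Beta" using adm calculation adm_head by auto
      ultimately show ?thesis using A 2 adm
        by (intro exI[of _ "subst A' 0 N"]) (auto intro: sred_subst sred.s_root root_intro)
    next
      case 3
      then have "c = BetaV" using adm adm_val by auto
      then show ?thesis using 3 A val_no_sred by blast
    qed
  qed
  consider "root c (App M N) u1"
      | M' where "u1 = App M' N" "sred c sf M M'" "(sf = Head \<or> sf = Weak \<or> sf = Left \<or> (sf = Right \<and> is_val N))"
      | N' where "u1 = App M N'" "sred c sf N N'" "(sf = Weak \<or> sf = Right \<or> (sf = Left \<and> is_val M))"
    using sred_app_inv[OF App.prems(1)] by blast
  then show ?case
  proof cases
    case 1
    then show ?thesis using rootcase App.prems by blast
  next
    case 2
    consider "root c (App M N) u2"
      | M'' where "u2 = App M'' N" "sred c sf M M''"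
      | N'' where "u2 = App M N''" "sred c sf N N''" "(sf = Weak \<or> sf = Right \<or> (sf = Left \<and> is_val M))"
      using sred_app_inv[OF App.prems(2)] by blast
    then show ?thesis
    proof cases
      case 1
      then show ?thesis using rootcase App.prems by metis
    next
      case c2: 2
      then obtain v where "sred c sf M' v" "sred c sf M'' v" using App 2 by blast
      then show ?thesis using 2 c2 by (auto intro: sred.intros)
    next
      case 3
      then show ?thesis using 2
        by (auto dest: val_sred_head intro!: exI[of _ "App M' N''"] intro: sred.intros)
    qed
  next
    case 3
    consider "root c (App M N) u2"
      | M'' where "u2 = App M'' N" "sred c sf M M''" "(sf = Head \<or> sf = Weak \<or> sf = Left \<or> (sf = Right \<and> is_val N))"
      | N'' where "u2 = App M N''" "sred c sf N N''"
      using sred_app_inv[OF App.prems(2)] by blast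
    then show ?thesis
    proof cases
      case 1
      then show ?thesis using rootcase App.prems by metis
    next
      case 2
      then show ?thesis using 3
        by (auto dest: val_sred_head intro!: exI[of _ "App M'' N'"] intro: sred.intros)
    next
      case c3: 3
      then obtain v where "sred c sf N' v" "sred c sf N'' v" using App 3 by blast
      then show ?thesis using 3 c3 by (auto intro: sred.intros)
    qed
  qed
next
  case (Op g ts)
  then show ?case by (simp add: sred_op)
qed

fun snf :: "calculus \<Rightarrow> surface \<Rightarrow> 'o tm \<Rightarrow> bool" where
  "snf c sf (Var i) = True"
| "snf c sf (Lam M) = (sf = Head \<longrightarrow> snf c sf M)"
| "snf c sf (App M N) = (\<not> (is_lam M \<and> (c = BetaV \<longrightarrow> is_val N)) \<and>
     (case sf of Head \<Rightarrow> snf c sf M | Weak \<Rightarrow> snf c sf M \<and> snf c sf N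
      | Left \<Rightarrow> snf c sf M \<and> (is_val M \<longrightarrow> snf c sf N)
      | Right \<Rightarrow> snf c sf N \<and> (is_val N \<longrightarrow> snf c sf M)))"
| "snf c sf (Op g ts) = True"

lemma sred_not_snf: "sred c sf t u \<Longrightarrow> \<not> snf c sf t"
  by (induct rule: sred.induct) (auto dest!: root_inv)

lemma not_snf_sred: "\<not> snf c sf t \<Longrightarrow> \<exists>u. sred c sf t u"
proof (induct t)
  case (Lam M)
  then show ?case by (auto intro: sred.s_head_lam)
next
  case (App M N)
  show ?case
  proof (cases "is_lam M \<and> (c = BetaV \<longrightarrow> is_val N)")
    case True
    then obtain A where "M = Lam A" by (cases M) auto
    then show ?thesis using True by (auto intro!: sred.s_root root_intro)
  next
    case False
    then show ?thesis using App by (cases sf) (auto intro: sred.intros)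
  qed
qed auto

lemma normal_snf: "normal (sred c sf) t \<longleftrightarrow> snf c sf t"
  unfolding normal_def using sred_not_snf not_snf_sred by blast

lemma snf_pres: "red c t u \<Longrightarrow> admissible c sf \<Longrightarrow> snf c sf t \<longrightarrow>
    snf c sf u \<and> is_val u = is_val t \<and> is_lam u = is_lam t"
proof (induct rule: red.induct)
  case (red_root M M')
  then show ?case using sred_not_snf sred.s_root by blast
next
  case (red_lam M M')
  then show ?case by auto
next
  case (red_appL M M' N)
  then show ?case using adm_val[of c sf] by (cases sf) auto
next
  case (red_appR N N' M)
  then show ?case using adm_val[of c sf] adm_head[of c] is_lam_val[of M] by (cases sf) auto
next
  case (red_op M M' g xs ys)
  then show ?case by auto
qed

lemma ured_red: "ured c sf t u \<Longrightarrow> red c t u"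
  by (induct rule: ured.induct) (auto intro: red.intros sred_red)

lemma ured_nonnormal: "ured c sf t u \<Longrightarrow> \<not> normal (sred c sf) t \<Longrightarrow> sred c sf t u"
  by (cases rule: ured.cases) auto

lemma ured_or_surf: "normal (sred c sf) t \<Longrightarrow> ured c sf t u \<Longrightarrow> \<exists>u'. ured c sf t u'"
  by blast

lemma red_ured: "red c t u \<Longrightarrow> \<exists>u'. ured c sf t u'"
proof (induct rule: red.induct)
  case (red_root M M')
  then show ?case by (auto intro: ured.u_surf sred.s_root)
next
  case (red_lam M M')
  then obtain x where x: "ured c sf M x" by blast
  show ?case
  proof (cases "normal (sred c sf) (Lam M)")
    case True
    then show ?thesis using x by (blast intro: ured.u_lam)
  next
    case False
    then show ?thesis unfolding normal_def by (blast intro: ured.u_surf)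
  qed
next
  case (red_appL M M' N)
  then obtain x where x: "ured c sf M x" by blast
  show ?case
  proof (cases "normal (sred c sf) (App M N)")
    case True
    then show ?thesis using x by (blast intro: ured.u_appL)
  next
    case False
    then show ?thesis unfolding normal_def by (blast intro: ured.u_surf)
  qed
next
  case (red_appR N N' M)
  then obtain x where x: "ured c sf N x" by blast
  show ?case
  proof (cases "normal (sred c sf) (App M N)")
    case True
    then show ?thesis using x by (blast intro: ured.u_appR)
  next
    case False
    then show ?thesis unfolding normal_def by (blast intro: ured.u_surf)
  qed
next
  case (red_op M M' g xs ys)
  then obtain x where x: "ured c sf M x" by blast
  show ?case
  proof (cases "normal (sred c sf) (Op g (xs @ M # ys))")
    case True
    then show ?thesis using x by (blast intro: ured.u_op)
  next
    case False
    then show ?thesis unfolding normal_def by (blast intro: ured.u_surf)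
  qed
qed

lemma normal_ured_red: "normal (ured c sf) t \<longleftrightarrow> normal (red c) t"
  unfolding normal_def using red_ured ured_red by blast

abbreviation SNu :: "calculus \<Rightarrow> surface \<Rightarrow> 'o tm \<Rightarrow> bool" where
  "SNu c sf t \<equiv> Wellfounded.accp ((\<lambda>a b. (ured c sf) b a)) t"

lemma ured_var: "\<not> ured c sf (Var i) u"
  by (auto elim: ured.cases simp: sred_var)

lemma ured_lam_snf: "ured c sf (Lam P) y \<Longrightarrow> snf c sf (Lam P) \<Longrightarrow> \<exists>P'. y = Lam P' \<and> ured c sf P P'"
  by (cases rule: ured.cases) (auto dest: sred_not_snf)

lemma ured_app_snf: "ured c sf (App P Q) y \<Longrightarrow> snf c sf (App P Q) \<Longrightarrow>
   (\<exists>P'. y = App P' Q \<and> ured c sf P P') \<or> (\<exists>Q'. y = App P Q' \<and> ured c sf Q Q')"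
  by (cases rule: ured.cases) (auto dest: sred_not_snf)

lemma ured_op: "ured c sf (Op g ts) y \<Longrightarrow>
   \<exists>xs P P' ys. ts = xs @ P # ys \<and> y = Op g (xs @ P' # ys) \<and> ured c sf P P'"
  by (cases rule: ured.cases) (auto simp: sred_op)

lemma ured_snf_pres: "ured c sf t u \<Longrightarrow> snf c sf t \<Longrightarrow> admissible c sf \<Longrightarrow> snf c sf u"
  using snf_pres ured_red by blast

lemma SN_lam: "SNu c sf P \<Longrightarrow> snf c sf (Lam P) \<Longrightarrow> admissible c sf \<Longrightarrow> SNu c sf (Lam P)"
proof (induct rule: Wellfounded.accp.induct)
  case (accI P)
  show ?case
  proof (rule Wellfounded.accp.accI)
    fix y assume u: "ured c sf (Lam P) y"
    then obtain P' where P': "y = Lam P'" "ured c sf P P'" using ured_lam_snf accI by blast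
    have "snf c sf y" using ured_snf_pres[OF u] accI by blast
    then show "SNu c sf y" using accI.hyps(2)[of P'] P' accI.prems(2) by blast
  qed
qed

lemma SN_app: "SNu c sf P \<Longrightarrow> SNu c sf Q \<Longrightarrow> snf c sf (App P Q) \<Longrightarrow> admissible c sf \<Longrightarrow>
   SNu c sf (App P Q)"
proof (induct arbitrary: Q rule: Wellfounded.accp.induct)
  case (accI P)
  note outer_h = accI.hyps and outer_p = accI.prems
  from accI.prems(1) show ?case using accI.prems(2)
  proof (induct rule: Wellfounded.accp.induct)
    case (accI Q)
    show ?case
    proof (rule Wellfounded.accp.accI)
      fix y assume u: "ured c sf (App P Q) y"
      have sy: "snf c sf y" using ured_snf_pres[OF u] accI outer_p by blast
      consider P' where "y = App P' Q" "ured c sf P P'" | Q' where "y = App P Q'" "ured c sf Q Q'"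
        using ured_app_snf[OF u] accI by blast
      then show "SNu c sf y"
      proof cases
        case 1
        have aQ: "SNu c sf Q" by (rule Wellfounded.accp.accI) (use accI.hyps(1) in blast)
        have "ured c sf P P'" "snf c sf (App P' Q)" using 1 sy by auto
        then show ?thesis using outer_h(2)[of P' Q] aQ outer_p(3) 1(1) by (simp del: snf.simps)
      next
        case 2
        have "ured c sf Q Q'" "snf c sf (App P Q')" using 2 sy by auto
        then show ?thesis using accI.hyps(2)[of Q'] 2(1) by (simp del: snf.simps)
      qed
    qed
  qed
qed

definition lstep :: "('a \<Rightarrow> 'a \<Rightarrow> bool) \<Rightarrow> 'a list \<Rightarrow> 'a list \<Rightarrow> bool" where
  "lstep r xs ys \<longleftrightarrow> (\<exists>as b b' cs. xs = as @ b # cs \<and> ys = as @ b' # cs \<and> r b b')"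

lemma lstep_cons: "lstep r (x # xs) ys \<Longrightarrow> (\<exists>x'. ys = x' # xs \<and> r x x') \<or> (\<exists>xs'. ys = x # xs' \<and> lstep r xs xs')"
proof -
  assume "lstep r (x # xs) ys"
  then obtain as b b' cs where h: "x # xs = as @ b # cs" "ys = as @ b' # cs" "r b b'"
    unfolding lstep_def by blast
  show ?thesis
  proof (cases as)
    case Nil
    then show ?thesis using h by auto
  next
    case (Cons a as')
    then have "xs = as' @ b # cs" "x = a" using h by auto
    then have "lstep r xs (as' @ b' # cs)" using h unfolding lstep_def by blast
    then show ?thesis using h Cons \<open>x = a\<close> by auto
  qed
qed

lemma lstep_nil: "\<not> lstep r [] ys"
  unfolding lstep_def by auto

lemma SN_list_cons: "Wellfounded.accp (\<lambda>a b. r b a) x \<Longrightarrow> Wellfounded.accp (\<lambda>a b. lstep r b a) xs \<Longrightarrow>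
  Wellfounded.accp (\<lambda>a b. lstep r b a) (x # xs)"
proof (induct arbitrary: xs rule: Wellfounded.accp.induct)
  case (accI x)
  note oh = accI.hyps
  from accI.prems show ?case
  proof (induct rule: Wellfounded.accp.induct)
    case (accI xs)
    have axs: "Wellfounded.accp (\<lambda>a b. lstep r b a) xs"
      by (rule Wellfounded.accp.accI) (use accI.hyps(1) in blast)
    show ?case
    proof (rule Wellfounded.accp.accI)
      fix y assume "lstep r (x # xs) y"
      then consider x' where "y = x' # xs" "r x x'" | xs' where "y = x # xs'" "lstep r xs xs'"
        using lstep_cons by metis
      then show "Wellfounded.accp (\<lambda>a b. lstep r b a) y"
      proof cases
        case 1
        then show ?thesis using oh(2)[of x' xs] axs by simp
      next
        case 2
        then show ?thesis using accI.hyps(2)[of xs'] by simp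
      qed
    qed
  qed
qed

lemma SN_list: "\<forall>x\<in>set ts. Wellfounded.accp (\<lambda>a b. r b a) x \<Longrightarrow> Wellfounded.accp (\<lambda>a b. lstep r b a) ts"
proof (induct ts)
  case Nil
  show ?case by (rule Wellfounded.accp.accI) (simp add: lstep_nil)
next
  case (Cons x xs)
  then show ?case using SN_list_cons[of r x xs] by simp
qed

lemma SN_op_list: "Wellfounded.accp (\<lambda>a b. lstep (ured c sf) b a) ts \<Longrightarrow> SNu c sf (Op g ts)"
proof (induct rule: Wellfounded.accp.induct)
  case (accI ts)
  show ?case
  proof (rule Wellfounded.accp.accI)
    fix y assume "ured c sf (Op g ts) y"
    from ured_op[OF this] obtain xs P P' ys where h: "ts = xs @ P # ys" "y = Op g (xs @ P' # ys)" "ured c sf P P'"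
      by blast
    then have "lstep (ured c sf) ts (xs @ P' # ys)" unfolding lstep_def by blast
    then have "SNu c sf (Op g (xs @ P' # ys))" using accI.hyps(2) by blast
    then show "SNu c sf y" using h(2) by simp
  qed
qed

lemma SN_op: "\<forall>x\<in>set ts. SNu c sf x \<Longrightarrow> SNu c sf (Op g ts)"
  by (rule SN_op_list[OF SN_list])

lemma qd_steps:
  assumes qd: "\<And>t u1 u2. r t u1 \<Longrightarrow> r t u2 \<Longrightarrow> u1 \<noteq> u2 \<Longrightarrow> \<exists>v. r u1 v \<and> r u2 v"
  shows "(r ^^ k) t t0 \<Longrightarrow> normal r t0 \<Longrightarrow> r t u \<Longrightarrow> \<exists>j. k = Suc j \<and> (r ^^ j) u t0"
proof (induct k arbitrary: t u)
  case 0
  then show ?case by (auto simp: normal_def)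
next
  case (Suc j)
  then obtain t1 where t1: "r t t1" "(r ^^ j) t1 t0" using relpowp_Suc_D2[OF Suc.prems(1)] by blast
  show ?case
  proof (cases "u = t1")
    case True
    then show ?thesis using t1 by auto
  next
    case False
    then obtain v where v: "r u v" "r t1 v" using qd[OF Suc.prems(3) t1(1)] by blast
    then obtain i where "j = Suc i" "(r ^^ i) v t0" using Suc.hyps[OF t1(2) Suc.prems(2) v(2)] by blast
    then show ?thesis using v relpowp_Suc_I2[of r u v i t0] by blast
  qed
qed

lemma SN_uni: "(sred c sf ^^ k) t t0 \<Longrightarrow> normal (sred c sf) t0 \<Longrightarrow> SNu c sf t0 \<Longrightarrow>
   admissible c sf \<Longrightarrow> SNu c sf t"
proof (induct k arbitrary: t)
  case 0
  then show ?case by simp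
next
  case (Suc j)
  show ?case
  proof (rule Wellfounded.accp.accI)
    fix y assume u: "ured c sf t y"
    have "\<not> normal (sred c sf) t" using relpowp_Suc_D2[OF Suc.prems(1)] by (auto simp: normal_def)
    then have s: "sred c sf t y" using ured_nonnormal u by blast
    have "(sred c sf ^^ j) y t0"
      using qd_steps[of "sred c sf", OF _ Suc.prems(1,2) s] qd Suc.prems(4) by blast
    then show "SNu c sf y" using Suc by blast
  qed
qed

lemma ipar_lam_inv2: "ipar c sf (Lam a) z \<Longrightarrow> \<exists>b. z = Lam b \<and> par c a b"
  by (cases rule: ipar.cases) (auto intro: ipar_par)

lemma ipar_op_inv2: "ipar c sf (Op g ts) z \<Longrightarrow> \<exists>ts'. z = Op g ts' \<and> list_all2 (par c) ts ts'"
  by (cases rule: ipar.cases) auto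

lemma ipars_lam: "(ipar c sf)\<^sup>*\<^sup>* x n \<Longrightarrow> \<forall>a. x = Lam a \<longrightarrow> (\<exists>n1. n = Lam n1 \<and> (par c)\<^sup>*\<^sup>* a n1)"
proof (induct rule: converse_rtranclp_induct)
  case (step y z)
  show ?case
  proof (intro allI impI)
    fix a assume "y = Lam a"
    then obtain b where b: "z = Lam b" "par c a b" using step(1) ipar_lam_inv2 by blast
    then obtain n1 where "n = Lam n1" "(par c)\<^sup>*\<^sup>* b n1" using step(3) by blast
    then show "\<exists>n1. n = Lam n1 \<and> (par c)\<^sup>*\<^sup>* a n1" using b by (blast intro: converse_rtranclp_into_rtranclp)
  qed
qed auto

lemma ipars_app: "(ipar c sf)\<^sup>*\<^sup>* x n \<Longrightarrow> \<forall>a b. x = App a b \<longrightarrow>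
   (\<exists>n1 n2. n = App n1 n2 \<and> (par c)\<^sup>*\<^sup>* a n1 \<and> (par c)\<^sup>*\<^sup>* b n2)"
proof (induct rule: converse_rtranclp_induct)
  case (step y z)
  show ?case
  proof (intro allI impI)
    fix a b assume "y = App a b"
    then obtain a' b' where ab: "z = App a' b'" "par c a a'" "par c b b'" using step(1) ipar_app_inv2 by blast
    then obtain n1 n2 where "n = App n1 n2" "(par c)\<^sup>*\<^sup>* a' n1" "(par c)\<^sup>*\<^sup>* b' n2"
      using step(3) by blast
    then show "\<exists>n1 n2. n = App n1 n2 \<and> (par c)\<^sup>*\<^sup>* a n1 \<and> (par c)\<^sup>*\<^sup>* b n2"
      using ab by (blast intro: converse_rtranclp_into_rtranclp)
  qed
qed auto

lemma ipar_var_inv: "ipar c sf (Var i) z \<Longrightarrow> z = Var i"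
  by (cases rule: ipar.cases) auto

lemma ipars_var: "(ipar c sf)\<^sup>*\<^sup>* x n \<Longrightarrow> x = Var i \<longrightarrow> n = Var i"
  by (induct rule: converse_rtranclp_induct) (auto dest: ipar_var_inv)

lemma ipars_op: "(ipar c sf)\<^sup>*\<^sup>* x n \<Longrightarrow> \<forall>ts. x = Op g ts \<longrightarrow>
   (\<exists>ns. n = Op g ns \<and> list_all2 (par c)\<^sup>*\<^sup>* ts ns)"
proof (induct rule: converse_rtranclp_induct)
  case base
  show ?case
  proof (intro allI impI)
    fix ts assume "n = Op g ts"
    moreover have "list_all2 (par c)\<^sup>*\<^sup>* ts ts" by (rule list.rel_refl) (rule rtranclp.rtrancl_refl)
    ultimately show "\<exists>ns. n = Op g ns \<and> list_all2 (par c)\<^sup>*\<^sup>* ts ns" by blast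
  qed
next
  case (step y z)
  show ?case
  proof (intro allI impI)
    fix ts assume "y = Op g ts"
    then have "ipar c sf (Op g ts) z" using step(1) by simp
    from ipar_op_inv2[OF this] obtain ts' where ts': "z = Op g ts'" "list_all2 (par c) ts ts'"
      by blast
    from step(3) ts'(1) obtain ns where ns: "n = Op g ns" "list_all2 (par c)\<^sup>*\<^sup>* ts' ns" by blast
    have "list_all2 (par c)\<^sup>*\<^sup>* ts ns"
      by (rule list_all2_trans[OF _ ts'(2) ns(2)]) (rule converse_rtranclp_into_rtranclp)
    then show "\<exists>ns. n = Op g ns \<and> list_all2 (par c)\<^sup>*\<^sup>* ts ns" using ns by blast
  qed
qed

lemma normal_lam: "normal (red c) (Lam a) \<Longrightarrow> normal (red c) a"
  unfolding normal_def by (auto intro: red.intros)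

lemma normal_app: "normal (red c) (App a b) \<Longrightarrow> normal (red c) a \<and> normal (red c) b"
  unfolding normal_def by (auto intro: red.intros)

lemma normal_op: "normal (red c) (Op g ns) \<Longrightarrow> x \<in> set ns \<Longrightarrow> normal (red c) x"
  unfolding normal_def by (auto intro: red.red_op dest: split_list)

lemma size_mem: "x \<in> set ns \<Longrightarrow> size x < Suc (size_list size ns)"
  by (induct ns) auto

lemma reduce_to_t0:
  assumes "normal (red c) n" "admissible c sf" "(red c)\<^sup>*\<^sup>* t n"
    and H: "\<And>t0. snf c sf t0 \<Longrightarrow> (ipar c sf)\<^sup>*\<^sup>* t0 n \<Longrightarrow> SNu c sf t0"
  shows "SNu c sf t"
proof -
  obtain t0 where t0: "(sred c sf)\<^sup>*\<^sup>* t t0" "(ipar c sf)\<^sup>*\<^sup>* t0 n" using factor assms by blast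
  have "normal (sred c sf) n" using assms(1) sred_red unfolding normal_def by blast
  then have nt0: "normal (sred c sf) t0" using persists t0(2) by blast
  then have "SNu c sf t0" using H t0 normal_snf by blast
  moreover obtain k where "(sred c sf ^^ k) t t0" using t0(1) rtranclp_imp_relpowp by fast
  ultimately show ?thesis using SN_uni nt0 assms(2) by blast
qed

lemma main_SN: "normal (red c) n \<Longrightarrow> admissible c sf \<Longrightarrow> (red c)\<^sup>*\<^sup>* t n \<Longrightarrow> SNu c sf t"
proof (induct n arbitrary: t rule: measure_induct_rule[of size])
  case (less n)
  show ?case
  proof (rule reduce_to_t0[OF less.prems])
    fix t0 assume sn: "snf c sf t0" and ip: "(ipar c sf)\<^sup>*\<^sup>* t0 n"
    show "SNu c sf t0"
    proof (cases t0)
      case (Var i)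
      then show ?thesis by (auto intro: Wellfounded.accp.accI simp: ured_var)
    next
      case (Lam a)
      then obtain n1 where n1: "n = Lam n1" "(par c)\<^sup>*\<^sup>* a n1" using ipars_lam[OF ip] by blast
      have "normal (red c) n1" using n1(1) less.prems(1) normal_lam by blast
      moreover have "(red c)\<^sup>*\<^sup>* a n1" using n1(2) pars_reds by blast
      moreover have "size n1 < size n" using n1(1) by simp
      ultimately have "SNu c sf a" using less.hyps less.prems(2) by blast
      then show ?thesis using SN_lam sn Lam less.prems by blast
    next
      case (App a b)
      then obtain n1 n2 where n1: "n = App n1 n2" "(par c)\<^sup>*\<^sup>* a n1" "(par c)\<^sup>*\<^sup>* b n2"
        using ipars_app[OF ip] by blast
      have nn: "normal (red c) n1" "normal (red c) n2" using n1(1) less.prems(1) normal_app by blast+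
      have rr: "(red c)\<^sup>*\<^sup>* a n1" "(red c)\<^sup>*\<^sup>* b n2" using n1(2,3) pars_reds by blast+
      have ss: "size n1 < size n" "size n2 < size n" using n1(1) by simp_all
      have "SNu c sf a" using less.hyps[OF ss(1) nn(1) less.prems(2) rr(1)] .
      moreover have "SNu c sf b" using less.hyps[OF ss(2) nn(2) less.prems(2) rr(2)] .
      ultimately show ?thesis using SN_app sn App less.prems by blast
    next
      case (Op g ts)
      then obtain ns where ns: "n = Op g ns" "list_all2 (par c)\<^sup>*\<^sup>* ts ns"
        using ipars_op[OF ip] by blast
      have allsn: "\<forall>x\<in>set ts. SNu c sf x"
      proof
        fix x assume "x \<in> set ts"
        then obtain i where i: "i < length ts" "x = ts ! i" by (auto simp: in_set_conv_nth)
        have li: "length ns = length ts" using ns(2) list_all2_lengthD by metis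
        have m: "ns ! i \<in> set ns" using i li by auto
        have "(par c)\<^sup>*\<^sup>* x (ns ! i)" using ns(2) i list_all2_nthD by blast
        then have r: "(red c)\<^sup>*\<^sup>* x (ns ! i)" using pars_reds by blast
        have nn: "normal (red c) (ns ! i)" using normal_op[OF _ m] less.prems(1) ns(1) by blast
        have "size (ns ! i) < size n" using ns(1) size_mem[OF m] by simp
        then show "SNu c sf x" using less.hyps nn less.prems(2) r by blast
      qed
      show ?thesis using SN_op[OF allsn] Op by simp
    qed
  qed
qed

lemma no_chain: "Wellfounded.accp ((\<lambda>a b. r b a)) t \<Longrightarrow> \<not> (\<exists>f. f 0 = t \<and> (\<forall>n. r (f n) (f (Suc n))))"
proof (induct rule: Wellfounded.accp.induct)
  case (accI x)
  show ?case
  proof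
    assume "\<exists>f. f 0 = x \<and> (\<forall>n. r (f n) (f (Suc n)))"
    then obtain f where f: "f 0 = x" "\<forall>n. r (f n) (f (Suc n))" by blast
    then have "r x (f 1)" by (metis One_nat_def)
    then have "\<not> (\<exists>g. g 0 = f 1 \<and> (\<forall>n. r (g n) (g (Suc n))))" using accI by auto
    moreover have "\<exists>g. g 0 = f 1 \<and> (\<forall>n. r (g n) (g (Suc n)))"
      by (rule exI[of _ "\<lambda>n. f (Suc n)"]) (use f in auto)
    ultimately show False by blast
  qed
qed

theorem mainTheorem5:
  fixes Ops :: "'o set" and ar :: "'o \<Rightarrow> nat"
  assumes "admissible c sf"
  shows "normalizing_strategy_on {t :: 'o tm. wf Ops ar t} (ured c sf) (red c)"
  unfolding normalizing_strategy_on_def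
proof (intro conjI ballI allI impI)
  fix t u :: "'o tm"
  assume "ured c sf t u"
  then show "red c t u" by (rule ured_red)
next
  fix t :: "'o tm"
  show "normal (ured c sf) t = normal (red c) t" by (rule normal_ured_red)
next
  fix t :: "'o tm"
  assume "\<exists>u. (red c)\<^sup>*\<^sup>* t u \<and> normal (red c) u"
  then obtain n where "(red c)\<^sup>*\<^sup>* t n" "normal (red c) n" by blast
  then have "SNu c sf t" using main_SN assms by blast
  then show "\<nexists>f. f 0 = t \<and> (\<forall>n. ured c sf (f n) (f (Suc n)))" by (rule no_chain)
next
  fix t u :: "'o tm"
  assume "(ured c sf)\<^sup>*\<^sup>* t u \<and> normal (ured c sf) u"
  then show "normal (red c) u" using normal_ured_red by blast
qed

end
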